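(* Let $L$ be a real $n\times n$ matrix with nonpositive off-diagonal entries and nonnegative row sums (i.e. $\sum_{j}L_{ij}\ge 0$ for every $i$). If $f\in\mathbb{Z}^n$ with $f\ge 0$ is $\chi$-superstable with respect to $L$, then $f$ is $z$-superstable with respect to $L$.
   Context: Vector inequalities are entrywise. A vector $f\in\mathbb{Z}^n$ with $f\ge0$ is $\chi$-superstable with respect to $L$ if for every $\chi\in\{0,1\}^n$ with $\chi\ne 0$ there exists $i$ with $f_i-(L\chi)_i<0$. A vector $f\in\mathbb{Z}^n$ with $f\ge 0$ is $z$-superstable with respect to $L$ if for every $z\in\mathbb{Z}^n$ with $z\ge0$ and $z\ne0$ there exists $i$ with $f_i-(Lz)_i<0$. *)

theory Defs
  imports "HOL-Analysis.Analysis"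
begin

definition Lmul :: "real^'n^'n \<Rightarrow> int^'n \<Rightarrow> real^'n" where
  "Lmul L x = L *v (\<chi> i. real_of_int (x $ i))"

definition chi_superstable :: "real^'n^'n \<Rightarrow> int^'n \<Rightarrow> bool" where
  "chi_superstable L f \<longleftrightarrow> (\<forall>i. f $ i \<ge> 0) \<and>
     (\<forall>c::int^'n. (\<forall>i. c $ i \<in> {0,1}) \<and> c \<noteq> 0 \<longrightarrow>
        (\<exists>i. real_of_int (f $ i) - Lmul L c $ i < 0))"

definition z_superstable :: "real^'n^'n \<Rightarrow> int^'n \<Rightarrow> bool" where
  "z_superstable L f \<longleftrightarrow> (\<forall>i. f $ i \<ge> 0) \<and>
     (\<forall>z::int^'n. (\<forall>i. z $ i \<ge> 0) \<and> z \<noteq> 0 \<longrightarrow>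
        (\<exists>i. real_of_int (f $ i) - Lmul L z $ i < 0))"

end

theory Submission
  imports Defs
begin

lemma Lmul_comp: "Lmul L x $ i = (\<Sum>j\<in>UNIV. L $ i $ j * real_of_int (x $ j))"
  by (simp add: Lmul_def matrix_vector_mult_def)

theorem mainTheorem4:
  fixes L :: "real^'n^'n" and f :: "int^'n"
  assumes offdiag: "\<And>i j. i \<noteq> j \<Longrightarrow> L $ i $ j \<le> 0"
    and rowsum: "\<And>i. (\<Sum>j\<in>UNIV. L $ i $ j) \<ge> 0"
    and fnonneg: "\<And>i. f $ i \<ge> 0"
    and chi: "chi_superstable L f"
  shows "z_superstable L f"
  unfolding z_superstable_def
proof (intro conjI allI impI)
  show "\<And>i. f $ i \<ge> 0" by (rule fnonneg)
  fix z :: "int^'n"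
  assume zz: "(\<forall>i. z $ i \<ge> 0) \<and> z \<noteq> 0"
  define M where "M = Max (range (\<lambda>i. z $ i))"
  have Mge: "\<And>j. z $ j \<le> M" unfolding M_def by simp
  obtain k where k: "z $ k = M" unfolding M_def
    by (metis (mono_tags, lifting) Max_in UNIV_not_empty finite finite_imageI image_iff image_is_empty)
  define c :: "int^'n" where "c = (\<chi> i. if z $ i = M then 1 else 0)"
  have c01: "\<forall>i. c $ i \<in> {0,1}" by (simp add: c_def)
  have "c $ k = 1" by (simp add: c_def k)
  hence "c \<noteq> 0" by (metis zero_index zero_neq_one)
  with chi c01 obtain i where i: "real_of_int (f $ i) - Lmul L c $ i < 0"
    unfolding chi_superstable_def by blast
  have ziM: "z $ i = M"
  proof (rule ccontr)
    assume ne: "z $ i \<noteq> M"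
    have "Lmul L c $ i \<le> 0" unfolding Lmul_comp
    proof (rule sum_nonpos)
      fix j show "L $ i $ j * real_of_int (c $ j) \<le> 0"
      proof (cases "j = i")
        case True thus ?thesis using ne by (simp add: c_def)
      next
        case False
        have "real_of_int (c $ j) \<ge> 0" by (simp add: c_def)
        thus ?thesis using offdiag[OF False[symmetric]] by (simp add: mult_nonpos_nonneg)
      qed
    qed
    thus False using i fnonneg[of i] by simp
  qed
  have "Lmul L z $ i - Lmul L c $ i = (\<Sum>j\<in>UNIV. L $ i $ j * real_of_int (z $ j - c $ j))"
    unfolding Lmul_comp by (simp add: sum_subtractf[symmetric] algebra_simps)
  also have "\<dots> \<ge> (\<Sum>j\<in>UNIV. L $ i $ j * real_of_int (M - 1))"
  proof (rule sum_mono)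
    fix j
    show "L $ i $ j * real_of_int (M - 1) \<le> L $ i $ j * real_of_int (z $ j - c $ j)"
    proof (cases "j = i")
      case True thus ?thesis using ziM by (simp add: c_def)
    next
      case False
      have "z $ j - c $ j \<le> M - 1" using Mge[of j] by (auto simp: c_def)
      hence "real_of_int (z $ j - c $ j) \<le> real_of_int (M - 1)" by linarith
      thus ?thesis using offdiag[OF False[symmetric]] by (simp add: mult_left_mono_neg)
    qed
  qed
  moreover have "(\<Sum>j\<in>UNIV. L $ i $ j * real_of_int (M - 1)) \<ge> 0"
  proof -
    have "M \<ge> 1"
    proof (rule ccontr)
      assume "\<not> M \<ge> 1"
      hence "\<forall>j. z $ j = 0" using Mge zz by (smt (verit))
      hence "z = 0" by (simp add: vec_eq_iff)
      thus False using zz by simp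
    qed
    hence "real_of_int (M - 1) \<ge> 0" by simp
    thus ?thesis using rowsum[of i] by (simp add: sum_distrib_right[symmetric])
  qed
  ultimately have "Lmul L z $ i \<ge> Lmul L c $ i" by linarith
  thus "\<exists>i. real_of_int (f $ i) - Lmul L z $ i < 0" using i by (intro exI[of _ i]) linarith
qed

end
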